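(* Let $k$ be a commutative ring and $H$ a Hopf algebra over $k$, finitely generated projective as a $k$-module, with counit $\epsilon$. Let $P$ be an invertible $k$-module, $Q=P^*$, and let $\psi:H\to P$ be a Frobenius homomorphism satisfying $\sum a_{(1)}\otimes\psi(a_{(2)})=1_H\otimes\psi(a)$ for all $a\in H$, with left norm $N=\sum_iN_i\otimes q_i\in H\otimes Q$. Then $H$ is a separable $k$-algebra if and only if the element $\sum_i\epsilon(N_i)q_i\in Q$ is Morita-invertible.
   Context: $\psi$ is a Frobenius homomorphism means that $x\mapsto(y\mapsto\psi(yx))$ is a bijection $H\to\mathrm{Hom}_k(H,P)$. The left norm of $\psi$ is the unique $N=\sum_iN_i\otimes q_i\in H\otimes Q$ with $\sum_i q_i(\psi(aN_i))=\epsilon(a)$ for all $a\in H$. An element $q\in Q$ is Morita-invertible if there is $p\in P$ with $q(p)=1_k$. *)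

theory Defs
  imports Complex_Main "HOL-Library.Function_Algebras"
begin

text \<open>A formal k-linear combination of elements of a type 'a is a function 'a => 'k
  (with finite support). Tensor products M (x) N are realised as formal combinations of
  pairs modulo the k-span of the bilinearity relations (the usual construction).\<close>

definition fsupp :: "('a \<Rightarrow> 'k::zero) \<Rightarrow> 'a set" where
  "fsupp c = {x. c x \<noteq> 0}"

definition fs_delta :: "'a \<Rightarrow> ('a \<Rightarrow> 'k::{zero,one})" where
  "fs_delta a = (\<lambda>x. if x = a then 1 else 0)"

definition fs_scale :: "'k::times \<Rightarrow> ('a \<Rightarrow> 'k) \<Rightarrow> ('a \<Rightarrow> 'k)" where
  "fs_scale r c = (\<lambda>x. r * c x)"

definition kspan :: "('a \<Rightarrow> 'k::comm_ring_1) set \<Rightarrow> ('a \<Rightarrow> 'k) set" where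
  "kspan R = {f. \<exists>S c. finite S \<and> S \<subseteq> R \<and> f = (\<Sum>r\<in>S. fs_scale (c r) r)}"

definition tens_rel ::
  "('k::comm_ring_1 \<Rightarrow> 'm::ab_group_add \<Rightarrow> 'm) \<Rightarrow> ('k \<Rightarrow> 'n::ab_group_add \<Rightarrow> 'n)
   \<Rightarrow> 'm set \<Rightarrow> 'n set \<Rightarrow> ('m \<times> 'n \<Rightarrow> 'k) set" where
  "tens_rel sM sN M N =
     {fs_delta (m + m', n) - fs_delta (m, n) - fs_delta (m', n) | m m' n. m \<in> M \<and> m' \<in> M \<and> n \<in> N}
   \<union> {fs_delta (m, n + n') - fs_delta (m, n) - fs_delta (m, n') | m n n'. m \<in> M \<and> n \<in> N \<and> n' \<in> N}
   \<union> {fs_delta (sM r m, n) - fs_scale r (fs_delta (m, n)) | r m n. m \<in> M \<and> n \<in> N}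
   \<union> {fs_delta (m, sN r n) - fs_scale r (fs_delta (m, n)) | r m n. m \<in> M \<and> n \<in> N}"

definition teq ::
  "('k::comm_ring_1 \<Rightarrow> 'm::ab_group_add \<Rightarrow> 'm) \<Rightarrow> ('k \<Rightarrow> 'n::ab_group_add \<Rightarrow> 'n)
   \<Rightarrow> 'm set \<Rightarrow> 'n set \<Rightarrow> ('m \<times> 'n \<Rightarrow> 'k) \<Rightarrow> ('m \<times> 'n \<Rightarrow> 'k) \<Rightarrow> bool" where
  "teq sM sN M N c d \<longleftrightarrow> c - d \<in> kspan (tens_rel sM sN M N)"

definition tens3_rel ::
  "('k::comm_ring_1 \<Rightarrow> 'h::ab_group_add \<Rightarrow> 'h) \<Rightarrow> ('h \<times> 'h \<times> 'h \<Rightarrow> 'k) set" where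
  "tens3_rel s =
     {fs_delta (x + x', y, z) - fs_delta (x, y, z) - fs_delta (x', y, z) | x x' y z. True}
   \<union> {fs_delta (x, y + y', z) - fs_delta (x, y, z) - fs_delta (x, y', z) | x y y' z. True}
   \<union> {fs_delta (x, y, z + z') - fs_delta (x, y, z) - fs_delta (x, y, z') | x y z z'. True}
   \<union> {fs_delta (s r x, y, z) - fs_scale r (fs_delta (x, y, z)) | r x y z. True}
   \<union> {fs_delta (x, s r y, z) - fs_scale r (fs_delta (x, y, z)) | r x y z. True}
   \<union> {fs_delta (x, y, s r z) - fs_scale r (fs_delta (x, y, z)) | r x y z. True}"

definition teq3 ::
  "('k::comm_ring_1 \<Rightarrow> 'h::ab_group_add \<Rightarrow> 'h) \<Rightarrow> ('h \<times> 'h \<times> 'h \<Rightarrow> 'k) \<Rightarrow> ('h \<times> 'h \<times> 'h \<Rightarrow> 'k) \<Rightarrow> bool" where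
  "teq3 s c d \<longleftrightarrow> c - d \<in> kspan (tens3_rel s)"

text \<open>(f (x) g) applied to a formal sum of pairs.\<close>
definition tmap :: "('a \<Rightarrow> 'c) \<Rightarrow> ('b \<Rightarrow> 'd) \<Rightarrow> ('a \<times> 'b \<Rightarrow> 'k::comm_ring_1) \<Rightarrow> ('c \<times> 'd \<Rightarrow> 'k)" where
  "tmap f g c = (\<lambda>(u, v). \<Sum>(x, y)\<in>{(x, y). c (x, y) \<noteq> 0 \<and> f x = u \<and> g y = v}. c (x, y))"

text \<open>Product in the algebra H (x) H.\<close>
definition tmult :: "('h::times \<times> 'h \<Rightarrow> 'k::comm_ring_1) \<Rightarrow> ('h \<times> 'h \<Rightarrow> 'k) \<Rightarrow> ('h \<times> 'h \<Rightarrow> 'k)" where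
  "tmult c d = (\<lambda>(u, v). \<Sum>((x, y), (x', y'))\<in>{((x, y), (x', y')). c (x, y) \<noteq> 0 \<and> d (x', y') \<noteq> 0
                   \<and> x * x' = u \<and> y * y' = v}. c (x, y) * d (x', y'))"

definition k_algebra :: "('k::comm_ring_1 \<Rightarrow> 'h::ring_1 \<Rightarrow> 'h) \<Rightarrow> bool" where
  "k_algebra s \<longleftrightarrow> module s \<and> (\<forall>r x y. s r (x * y) = s r x * y \<and> s r (x * y) = x * s r y)"

text \<open>Finitely generated projective k-module: direct summand of some k^n
  (equivalently, a finite dual basis).\<close>
definition fg_projective :: "('k::comm_ring_1 \<Rightarrow> 'm::ab_group_add \<Rightarrow> 'm) \<Rightarrow> bool" where
  "fg_projective s \<longleftrightarrow> module s \<and>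
     (\<exists>(n::nat) (e::nat \<Rightarrow> 'm) (f::nat \<Rightarrow> 'm \<Rightarrow> 'k).
        (\<forall>i<n. module_hom s (*) (f i)) \<and> (\<forall>x. x = (\<Sum>i<n. s (f i x) (e i))))"

text \<open>Hopf algebra over k with comultiplication D (values: formal sums representing
  elements of H (x) H), counit eps and antipode S.\<close>
definition hopf_algebra ::
  "('k::comm_ring_1 \<Rightarrow> 'h::ring_1 \<Rightarrow> 'h) \<Rightarrow> ('h \<Rightarrow> ('h \<times> 'h \<Rightarrow> 'k)) \<Rightarrow> ('h \<Rightarrow> 'k) \<Rightarrow> ('h \<Rightarrow> 'h) \<Rightarrow> bool" where
  "hopf_algebra s D eps S \<longleftrightarrow>
     k_algebra s
   \<comment> \<open>comultiplication: well-defined k-linear algebra map H -> H (x) H\<close>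
   \<and> (\<forall>a. finite (fsupp (D a)))
   \<and> (\<forall>a b. teq s s UNIV UNIV (D (a + b)) (D a + D b))
   \<and> (\<forall>r a. teq s s UNIV UNIV (D (s r a)) (fs_scale r (D a)))
   \<and> (\<forall>a b. teq s s UNIV UNIV (D (a * b)) (tmult (D a) (D b)))
   \<and> teq s s UNIV UNIV (D 1) (fs_delta (1, 1))
   \<comment> \<open>coassociativity (D (x) id) o D = (id (x) D) o D in H (x) H (x) H\<close>
   \<and> (\<forall>a. teq3 s
          (\<lambda>(u, v, w). \<Sum>x\<in>{x. D a (x, w) \<noteq> 0}. D a (x, w) * D x (u, v))
          (\<lambda>(u, v, w). \<Sum>y\<in>{y. D a (u, y) \<noteq> 0}. D a (u, y) * D y (v, w)))
   \<comment> \<open>counit: k-linear algebra map with (eps (x) id) o D = id = (id (x) eps) o D\<close>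
   \<and> module_hom s (*) eps
   \<and> (\<forall>a b. eps (a * b) = eps a * eps b) \<and> eps 1 = 1
   \<and> (\<forall>a. (\<Sum>(x, y)\<in>fsupp (D a). s (D a (x, y) * eps x) y) = a)
   \<and> (\<forall>a. (\<Sum>(x, y)\<in>fsupp (D a). s (D a (x, y) * eps y) x) = a)
   \<comment> \<open>antipode\<close>
   \<and> module_hom s s S
   \<and> (\<forall>a. (\<Sum>(x, y)\<in>fsupp (D a). s (D a (x, y)) (S x * y)) = s (eps a) 1)
   \<and> (\<forall>a. (\<Sum>(x, y)\<in>fsupp (D a). s (D a (x, y)) (x * S y)) = s (eps a) 1)"

text \<open>Separable k-algebra: there is a separability idempotent e in H (x) H,
  i.e. mu(e) = 1 and (a (x) 1) e = e (1 (x) a) for all a.\<close>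
definition separable_algebra :: "('k::comm_ring_1 \<Rightarrow> 'h::ring_1 \<Rightarrow> 'h) \<Rightarrow> bool" where
  "separable_algebra s \<longleftrightarrow>
     (\<exists>e :: 'h \<times> 'h \<Rightarrow> 'k. finite (fsupp e)
        \<and> (\<Sum>(x, y)\<in>fsupp e. s (e (x, y)) (x * y)) = 1
        \<and> (\<forall>a. teq s s UNIV UNIV (tmap (\<lambda>x. a * x) id e) (tmap id (\<lambda>y. y * a) e)))"

definition kdual :: "('k::comm_ring_1 \<Rightarrow> 'p::ab_group_add \<Rightarrow> 'p) \<Rightarrow> ('p \<Rightarrow> 'k) set" where
  "kdual s = {q. module_hom s (*) q}"

definition fun_scale :: "'k::comm_ring_1 \<Rightarrow> ('p \<Rightarrow> 'k) \<Rightarrow> ('p \<Rightarrow> 'k)" where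
  "fun_scale r q = (\<lambda>x. r * q x)"

text \<open>Invertible k-module: f.g. projective and the evaluation map P (x) P^* -> k is an
  isomorphism (so P^* is an inverse of P in the Picard group).\<close>
definition invertible_module :: "('k::comm_ring_1 \<Rightarrow> 'p::ab_group_add \<Rightarrow> 'p) \<Rightarrow> bool" where
  "invertible_module s \<longleftrightarrow> fg_projective s
     \<and> (\<exists>c :: 'p \<times> ('p \<Rightarrow> 'k) \<Rightarrow> 'k. finite (fsupp c) \<and> fsupp c \<subseteq> UNIV \<times> kdual s
          \<and> (\<Sum>(p, q)\<in>fsupp c. c (p, q) * q p) = 1)
     \<and> (\<forall>c :: 'p \<times> ('p \<Rightarrow> 'k) \<Rightarrow> 'k. finite (fsupp c) \<and> fsupp c \<subseteq> UNIV \<times> kdual s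
          \<and> (\<Sum>(p, q)\<in>fsupp c. c (p, q) * q p) = 0
          \<longrightarrow> teq s fun_scale UNIV (kdual s) c 0)"

definition frobenius_hom ::
  "('k::comm_ring_1 \<Rightarrow> 'h::ring_1 \<Rightarrow> 'h) \<Rightarrow> ('k \<Rightarrow> 'p::ab_group_add \<Rightarrow> 'p) \<Rightarrow> ('h \<Rightarrow> 'p) \<Rightarrow> bool" where
  "frobenius_hom sH sP psi \<longleftrightarrow> module_hom sH sP psi
     \<and> bij_betw (\<lambda>x. \<lambda>y. psi (y * x)) UNIV {f. module_hom sH sP f}"

definition left_norm ::
  "('k::comm_ring_1 \<Rightarrow> 'h::ring_1 \<Rightarrow> 'h) \<Rightarrow> ('k \<Rightarrow> 'p::ab_group_add \<Rightarrow> 'p) \<Rightarrow> ('h \<Rightarrow> 'k)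
   \<Rightarrow> ('h \<Rightarrow> 'p) \<Rightarrow> ('h \<times> ('p \<Rightarrow> 'k) \<Rightarrow> 'k) \<Rightarrow> bool" where
  "left_norm sH sP eps psi N \<longleftrightarrow> finite (fsupp N) \<and> fsupp N \<subseteq> UNIV \<times> kdual sP
     \<and> (\<forall>a. (\<Sum>(h, q)\<in>fsupp N. N (h, q) * q (psi (a * h))) = eps a)
     \<and> (\<forall>N'. finite (fsupp N') \<and> fsupp N' \<subseteq> UNIV \<times> kdual sP
          \<and> (\<forall>a. (\<Sum>(h, q)\<in>fsupp N'. N' (h, q) * q (psi (a * h))) = eps a)
          \<longrightarrow> teq sH fun_scale UNIV (kdual sP) N' N)"

definition morita_invertible :: "('k::comm_ring_1 \<Rightarrow> 'p::ab_group_add \<Rightarrow> 'p) \<Rightarrow> ('p \<Rightarrow> 'k) \<Rightarrow> bool" where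
  "morita_invertible sP q \<longleftrightarrow> q \<in> kdual sP \<and> (\<exists>p. q p = 1)"

end

theory Submission
  imports Defs
begin


lemma sum_apply_fun: "(\<Sum>i\<in>I. f i) x = (\<Sum>i\<in>I. f i x)"
  by (induct I rule: infinite_finite_induct) auto

lemma module_mult: "module ((*) :: 'k::comm_ring_1 \<Rightarrow> 'k \<Rightarrow> 'k)"
  by unfold_locales (simp_all add: algebra_simps)

lemma module_fs: "module (fs_scale :: 'k::comm_ring_1 \<Rightarrow> ('a \<Rightarrow> 'k) \<Rightarrow> _)"
  by unfold_locales (simp_all add: fs_scale_def algebra_simps fun_eq_iff)

lemma kspan_span: "kspan R = module.span fs_scale R"
  unfolding kspan_def module.span_explicit[OF module_fs] by auto

lemma fs_scale_sum: "fs_scale (r::'k::comm_ring_1) (\<Sum>i\<in>I. f i) = (\<Sum>i\<in>I. fs_scale r (f i))"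
  by (simp add: fs_scale_def fun_eq_iff sum_apply_fun sum_distrib_left)

lemma teq_refl: "teq sM sN M N c c"
  unfolding teq_def kspan_span using module.span_zero[OF module_fs] by simp

lemma teq_sym: "teq sM sN M N c d \<Longrightarrow> teq sM sN M N d c"
  unfolding teq_def kspan_span using module.span_neg[OF module_fs] by fastforce

lemma teq_trans[trans]: "teq sM sN M N c d \<Longrightarrow> teq sM sN M N d e \<Longrightarrow> teq sM sN M N c e"
proof -
  assume a: "teq sM sN M N c d" "teq sM sN M N d e"
  have "c - e = (c - d) + (d - e)" by simp
  then show ?thesis using a module.span_add[OF module_fs] unfolding teq_def kspan_span by metis
qed

lemma teq_add: "teq sM sN M N c c' \<Longrightarrow> teq sM sN M N d d' \<Longrightarrow> teq sM sN M N (c + d) (c' + d')"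
proof -
  assume a: "teq sM sN M N c c'" "teq sM sN M N d d'"
  have "(c + d) - (c' + d') = (c - c') + (d - d')" by simp
  then show ?thesis using a module.span_add[OF module_fs] unfolding teq_def kspan_span by metis
qed

lemma teq_scale: "teq sM sN M N c c' \<Longrightarrow> teq sM sN M N (fs_scale r c) (fs_scale r c')"
  unfolding teq_def kspan_span using module.span_scale[OF module_fs]
  by (metis module.scale_right_diff_distrib module_fs)

lemma teq_sum: "(\<And>i. i \<in> I \<Longrightarrow> teq sM sN M N (c i) (d i)) \<Longrightarrow> teq sM sN M N (\<Sum>i\<in>I. c i) (\<Sum>i\<in>I. d i)"
  by (induct I rule: infinite_finite_induct) (auto intro: teq_refl teq_add)

lemma teq_base: "r \<in> tens_rel sM sN M N \<Longrightarrow> teq sM sN M N r 0"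
  unfolding teq_def kspan_span using module.span_base[OF module_fs] by simp

lemma teq_diff_base: "a - b - c \<in> tens_rel sM sN M N \<Longrightarrow> teq sM sN M N a (b + c)"
  using teq_base[of "a - b - c"] unfolding teq_def by (simp add: algebra_simps)

lemma teq_diff_base2: "a - b \<in> tens_rel sM sN M N \<Longrightarrow> teq sM sN M N a b"
  using teq_base[of "a - b"] unfolding teq_def by (simp add: algebra_simps)

lemma teq_delta_add1: "m \<in> M \<Longrightarrow> m' \<in> M \<Longrightarrow> n \<in> N \<Longrightarrow>
   teq sM sN M N (fs_delta (m + m', n)) (fs_delta (m, n) + fs_delta (m', n))"
  apply (rule teq_diff_base) unfolding tens_rel_def
  apply (rule UnI1, rule UnI1, rule UnI1, rule CollectI)
  apply (rule exI[of _ m], rule exI[of _ m'], rule exI[of _ n]) by simp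

lemma teq_delta_add2: "m \<in> M \<Longrightarrow> n \<in> N \<Longrightarrow> n' \<in> N \<Longrightarrow>
   teq sM sN M N (fs_delta (m, n + n')) (fs_delta (m, n) + fs_delta (m, n'))"
  apply (rule teq_diff_base) unfolding tens_rel_def
  apply (rule UnI1, rule UnI1, rule UnI2, rule CollectI)
  apply (rule exI[of _ m], rule exI[of _ n], rule exI[of _ n']) by simp

lemma teq_delta_scale1: "m \<in> M \<Longrightarrow> n \<in> N \<Longrightarrow>
   teq sM sN M N (fs_delta (sM r m, n)) (fs_scale r (fs_delta (m, n)))"
  apply (rule teq_diff_base2) unfolding tens_rel_def
  apply (rule UnI1, rule UnI2, rule CollectI)
  apply (rule exI[of _ r], rule exI[of _ m], rule exI[of _ n]) by simp

lemma teq_delta_scale2: "m \<in> M \<Longrightarrow> n \<in> N \<Longrightarrow>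
   teq sM sN M N (fs_delta (m, sN r n)) (fs_scale r (fs_delta (m, n)))"
  apply (rule teq_diff_base2) unfolding tens_rel_def
  apply (rule UnI2, rule CollectI)
  apply (rule exI[of _ r], rule exI[of _ m], rule exI[of _ n]) by simp

section \<open>Evaluation of formal sums\<close>

definition ev :: "('k::comm_ring_1 \<Rightarrow> 'm::ab_group_add \<Rightarrow> 'm) \<Rightarrow> ('a \<Rightarrow> 'm) \<Rightarrow> ('a \<Rightarrow> 'k) \<Rightarrow> 'm" where
  "ev sc F c = (\<Sum>x\<in>fsupp c. sc (c x) (F x))"

lemma fsupp_add: "fsupp ((c::'a\<Rightarrow>'k::comm_ring_1) + d) \<subseteq> fsupp c \<union> fsupp d"
  by (auto simp: fsupp_def)
lemma fsupp_diff: "fsupp ((c::'a\<Rightarrow>'k::comm_ring_1) - d) \<subseteq> fsupp c \<union> fsupp d"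
  by (auto simp: fsupp_def)
lemma fsupp_scale: "fsupp (fs_scale r (c::'a\<Rightarrow>'k::comm_ring_1)) \<subseteq> fsupp c"
  by (auto simp: fsupp_def fs_scale_def)
lemma fsupp_delta: "fsupp (fs_delta a :: 'a \<Rightarrow> 'k::zero_neq_one) = {a}"
  by (auto simp: fsupp_def fs_delta_def)
lemma fsupp_zero[simp]: "fsupp 0 = {}"
  by (auto simp: fsupp_def)
lemma fsupp_zero'[simp]: "fsupp (\<lambda>_. 0) = {}"
  by (auto simp: fsupp_def)

lemma finite_fsupp_add: "finite (fsupp (c::'a\<Rightarrow>'k::comm_ring_1)) \<Longrightarrow> finite (fsupp d) \<Longrightarrow> finite (fsupp (c + d))"
  by (meson finite_UnI finite_subset fsupp_add)
lemma finite_fsupp_diff: "finite (fsupp (c::'a\<Rightarrow>'k::comm_ring_1)) \<Longrightarrow> finite (fsupp d) \<Longrightarrow> finite (fsupp (c - d))"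
  by (meson finite_UnI finite_subset fsupp_diff)
lemma finite_fsupp_scale: "finite (fsupp (c::'a\<Rightarrow>'k::comm_ring_1)) \<Longrightarrow> finite (fsupp (fs_scale r c))"
  by (meson finite_subset fsupp_scale)
lemma finite_fsupp_delta: "finite (fsupp (fs_delta a :: 'a \<Rightarrow> 'k::zero_neq_one))"
  by (simp add: fsupp_delta)
lemma finite_fsupp_sum: "(\<And>i. i \<in> I \<Longrightarrow> finite (fsupp (c i :: 'a\<Rightarrow>'k::comm_ring_1))) \<Longrightarrow> finite (fsupp (\<Sum>i\<in>I. c i))"
  by (induct I rule: infinite_finite_induct) (auto intro: finite_fsupp_add)

lemmas finite_fsupp_intros = finite_fsupp_add finite_fsupp_diff finite_fsupp_scale finite_fsupp_delta
  finite_fsupp_sum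

lemma ev_superset:
  assumes "module sc" "finite A" "fsupp c \<subseteq> A"
  shows "ev sc F c = (\<Sum>x\<in>A. sc (c x) (F x))"
  unfolding ev_def using assms
  by (intro sum.mono_neutral_left) (auto simp: fsupp_def module.scale_zero_left)

lemma ev_add:
  assumes "module sc" "finite (fsupp c)" "finite (fsupp d)"
  shows "ev sc F (c + d) = ev sc F c + ev sc F d"
proof -
  let ?A = "fsupp c \<union> fsupp d"
  have "ev sc F (c + d) = (\<Sum>x\<in>?A. sc ((c + d) x) (F x))"
    by (rule ev_superset[OF assms(1)]) (use assms fsupp_add[of c d] in auto)
  also have "\<dots> = (\<Sum>x\<in>?A. sc (c x) (F x)) + (\<Sum>x\<in>?A. sc (d x) (F x))"
    by (simp add: module.scale_left_distrib[OF assms(1)] sum.distrib)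
  also have "\<dots> = ev sc F c + ev sc F d"
    using ev_superset[OF assms(1), of ?A c F] ev_superset[OF assms(1), of ?A d F] assms by auto
  finally show ?thesis .
qed

lemma ev_diff:
  assumes "module sc" "finite (fsupp c)" "finite (fsupp d)"
  shows "ev sc F (c - d) = ev sc F c - ev sc F d"
proof -
  let ?A = "fsupp c \<union> fsupp d"
  have "ev sc F (c - d) = (\<Sum>x\<in>?A. sc ((c - d) x) (F x))"
    by (rule ev_superset[OF assms(1)]) (use assms fsupp_diff[of c d] in auto)
  also have "\<dots> = (\<Sum>x\<in>?A. sc (c x) (F x)) - (\<Sum>x\<in>?A. sc (d x) (F x))"
    by (simp add: module.scale_left_diff_distrib[OF assms(1)] sum_subtractf)
  also have "\<dots> = ev sc F c - ev sc F d"
    using ev_superset[OF assms(1), of ?A c F] ev_superset[OF assms(1), of ?A d F] assms by auto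
  finally show ?thesis .
qed

lemma ev_scale:
  assumes "module sc" "finite (fsupp c)"
  shows "ev sc F (fs_scale r c) = sc r (ev sc F c)"
proof -
  have "ev sc F (fs_scale r c) = (\<Sum>x\<in>fsupp c. sc (fs_scale r c x) (F x))"
    by (rule ev_superset[OF assms(1)]) (use assms fsupp_scale[of r c] in auto)
  also have "\<dots> = sc r (ev sc F c)"
    by (simp add: ev_def fs_scale_def module.scale_sum_right[OF assms(1)] module.scale_scale[OF assms(1)])
  finally show ?thesis .
qed

lemma ev_delta:
  assumes "module sc"
  shows "ev sc F (fs_delta a) = F a"
  unfolding ev_def fsupp_delta by (simp add: fs_delta_def module.scale_one[OF assms])

lemma ev_sum:
  assumes "module sc" "\<And>i. i \<in> I \<Longrightarrow> finite (fsupp (c i))"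
  shows "ev sc F (\<Sum>i\<in>I. c i) = (\<Sum>i\<in>I. ev sc F (c i))"
  using assms(2)
proof (induct I rule: infinite_finite_induct)
  case (infinite A) then show ?case by (simp add: ev_def)
next
  case empty then show ?case by (simp add: ev_def)
next
  case (insert x F')
  have "ev sc F (\<Sum>i\<in>insert x F'. c i) = ev sc F (c x + (\<Sum>i\<in>F'. c i))"
    by (subst sum.insert[OF insert(1,2)]) (rule refl)
  also have "\<dots> = ev sc F (c x) + ev sc F (\<Sum>i\<in>F'. c i)"
    by (rule ev_add[OF assms(1)]) (use insert(4) in \<open>auto intro: finite_fsupp_sum\<close>)
  also have "ev sc F (\<Sum>i\<in>F'. c i) = (\<Sum>i\<in>F'. ev sc F (c i))"
    by (rule insert(3)) (use insert(4) in auto)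
  finally show ?case by (simp only: sum.insert[OF insert(1,2)])
qed

lemma ev_fun_add:
  assumes "module sc"
  shows "ev sc (\<lambda>x. F x + G x) c = ev sc F c + ev sc G c"
  by (simp add: ev_def module.scale_right_distrib[OF assms] sum.distrib)

lemma ev_fun_scale:
  assumes "module sc"
  shows "ev sc (\<lambda>x. sc r (F x)) c = sc r (ev sc F c)"
  by (simp add: ev_def module.scale_sum_right[OF assms] module.scale_left_commute[OF assms])

lemma ev_cong: "(\<And>x. x \<in> fsupp c \<Longrightarrow> F x = G x) \<Longrightarrow> ev sc F c = ev sc G c"
  by (simp add: ev_def)

lemma ev_hom:
  assumes "module_hom s1 s2 L"
  shows "L (ev s1 F c) = ev s2 (\<lambda>x. L (F x)) c"
  by (simp add: ev_def module_hom.sum[OF assms] module_hom.scale[OF assms])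

lemma ev_push:
  assumes "module sc" "finite A" "\<And>z. c z = (\<Sum>i\<in>{i\<in>A. h i = z}. w i)"
  shows "ev sc F c = (\<Sum>i\<in>A. sc (w i) (F (h i)))"
proof -
  have sub: "fsupp c \<subseteq> h ` A"
  proof
    fix z assume "z \<in> fsupp c"
    then have "(\<Sum>i\<in>{i\<in>A. h i = z}. w i) \<noteq> 0" using assms(3) by (simp add: fsupp_def)
    then obtain i where "i \<in> A" "h i = z" by (metis (mono_tags, lifting) empty_Collect_eq sum.empty)
    then show "z \<in> h ` A" by blast
  qed
  have "ev sc F c = (\<Sum>z\<in>h ` A. sc (c z) (F z))"
    using assms sub by (intro ev_superset) auto
  also have "\<dots> = (\<Sum>z\<in>h ` A. \<Sum>i\<in>{i\<in>A. h i = z}. sc (w i) (F (h i)))"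
    by (intro sum.cong refl) (auto simp: assms(3) module.scale_sum_left[OF assms(1)])
  also have "\<dots> = (\<Sum>i\<in>A. sc (w i) (F (h i)))"
    using assms(2) by (rule sum.image_gen[symmetric])
  finally show ?thesis .
qed

lemma tmap_push: "tmap f g c z = (\<Sum>i\<in>{i \<in> fsupp c. (\<lambda>(x, y). (f x, g y)) i = z}. c i)"
proof -
  obtain u v where z: "z = (u, v)" by (cases z)
  show ?thesis
    unfolding z tmap_def prod.case by (rule sum.cong) (auto simp: fsupp_def)
qed

lemma ev_tmap:
  assumes "module sc" "finite (fsupp c)"
  shows "ev sc F (tmap f g c) = ev sc (\<lambda>(x, y). F (f x, g y)) c"
proof -
  have "ev sc F (tmap f g c) = (\<Sum>i\<in>fsupp c. sc (c i) (F ((\<lambda>(x, y). (f x, g y)) i)))"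
    by (rule ev_push[OF assms tmap_push])
  also have "\<dots> = ev sc (\<lambda>(x, y). F (f x, g y)) c"
    by (auto simp: ev_def intro!: sum.cong)
  finally show ?thesis .
qed

lemma finite_fsupp_push:
  assumes "finite A" "\<And>z. c z = (\<Sum>i\<in>{i\<in>A. h i = z}. w i)"
  shows "finite (fsupp c)"
proof -
  have "fsupp c \<subseteq> h ` A"
  proof
    fix z assume "z \<in> fsupp c"
    then have "(\<Sum>i\<in>{i\<in>A. h i = z}. w i) \<noteq> 0" using assms(2) by (simp add: fsupp_def)
    then obtain i where "i \<in> A" "h i = z" by (metis (mono_tags, lifting) empty_Collect_eq sum.empty)
    then show "z \<in> h ` A" by blast
  qed
  then show ?thesis using assms(1) finite_subset by blast
qed

lemma finite_fsupp_tmap: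
  assumes "finite (fsupp c)"
  shows "finite (fsupp (tmap f g c))"
  by (rule finite_fsupp_push[OF assms tmap_push])

lemma fsupp_tmap: "fsupp (tmap f g c) \<subseteq> (\<lambda>(x, y). (f x, g y)) ` fsupp c"
proof
  fix z assume "z \<in> fsupp (tmap f g c)"
  then have ne: "(\<Sum>i\<in>{i \<in> fsupp c. (\<lambda>(x, y). (f x, g y)) i = z}. c i) \<noteq> 0"
    by (simp add: fsupp_def tmap_push)
  have "{i \<in> fsupp c. (\<lambda>(x, y). (f x, g y)) i = z} \<noteq> {}"
  proof
    assume "{i \<in> fsupp c. (\<lambda>(x, y). (f x, g y)) i = z} = {}"
    then show False using ne by (simp only: sum.empty) simp
  qed
  then show "z \<in> (\<lambda>(x, y). (f x, g y)) ` fsupp c" by blast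
qed

section \<open>Bilinear maps respect teq\<close>

lemma ev_rel_step:
  assumes "module sR" "finite (fsupp x) \<and> ev sR F x = 0" "finite (fsupp y) \<and> ev sR F y = 0"
  shows "finite (fsupp (fs_scale r x + y)) \<and> ev sR F (fs_scale r x + y) = 0"
  using assms by (simp add: finite_fsupp_intros ev_add ev_scale module.scale_zero_right)

lemma teq_ev:
  assumes sR: "module sR"
  and a1: "\<And>m m' n. m\<in>M \<Longrightarrow> m'\<in>M \<Longrightarrow> n\<in>N \<Longrightarrow> F (m+m', n) = F (m,n) + F (m',n)"
  and a2: "\<And>m n n'. m\<in>M \<Longrightarrow> n\<in>N \<Longrightarrow> n'\<in>N \<Longrightarrow> F (m, n+n') = F (m,n) + F (m,n')"
  and a3: "\<And>r m n. m\<in>M \<Longrightarrow> n\<in>N \<Longrightarrow> F (sM r m, n) = sR r (F (m,n))"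
  and a4: "\<And>r m n. m\<in>M \<Longrightarrow> n\<in>N \<Longrightarrow> F (m, sN r n) = sR r (F (m,n))"
  and t: "teq sM sN M N c d" and fc: "finite (fsupp c)" and fd: "finite (fsupp d)"
  shows "ev sR F c = ev sR F d"
proof -
  have rel: "finite (fsupp x) \<and> ev sR F x = 0" if "x \<in> tens_rel sM sN M N" for x
    using that unfolding tens_rel_def
  proof (elim UnE CollectE exE conjE)
    fix m m' n assume "x = fs_delta (m + m', n) - fs_delta (m, n) - fs_delta (m', n)" "m\<in>M" "m'\<in>M" "n\<in>N"
    then show ?thesis by (simp add: finite_fsupp_intros ev_diff[OF sR] ev_delta[OF sR] a1)
  next
    fix m n n' assume "x = fs_delta (m, n + n') - fs_delta (m, n) - fs_delta (m, n')" "m\<in>M" "n\<in>N" "n'\<in>N"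
    then show ?thesis by (simp add: finite_fsupp_intros ev_diff[OF sR] ev_delta[OF sR] a2)
  next
    fix r m n assume "x = fs_delta (sM r m, n) - fs_scale r (fs_delta (m, n))" "m\<in>M" "n\<in>N"
    then show ?thesis by (simp add: finite_fsupp_intros ev_diff[OF sR] ev_delta[OF sR] ev_scale[OF sR] a3)
  next
    fix r m n assume "x = fs_delta (m, sN r n) - fs_scale r (fs_delta (m, n))" "m\<in>M" "n\<in>N"
    then show ?thesis by (simp add: finite_fsupp_intros ev_diff[OF sR] ev_delta[OF sR] ev_scale[OF sR] a4)
  qed
  have span: "finite (fsupp x) \<and> ev sR F x = 0" if "x \<in> module.span fs_scale (tens_rel sM sN M N)" for x
    apply (rule module.span_induct_alt[OF module_fs that])
    subgoal by (simp add: ev_def)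
    subgoal using rel ev_rel_step[OF sR] by blast
    done
  have "ev sR F (c - d) = 0" using span t unfolding teq_def kspan_span by blast
  then show ?thesis using ev_diff[OF sR fc fd] by simp
qed

lemma teq3_ev:
  assumes sR: "module sR"
  and a1: "\<And>x x' y z. F (x + x', y, z) = F (x, y, z) + F (x', y, z)"
  and a2: "\<And>x y y' z. F (x, y + y', z) = F (x, y, z) + F (x, y', z)"
  and a3: "\<And>x y z z'. F (x, y, z + z') = F (x, y, z) + F (x, y, z')"
  and a4: "\<And>r x y z. F (s r x, y, z) = sR r (F (x, y, z))"
  and a5: "\<And>r x y z. F (x, s r y, z) = sR r (F (x, y, z))"
  and a6: "\<And>r x y z. F (x, y, s r z) = sR r (F (x, y, z))"
  and t: "teq3 s c d" and fc: "finite (fsupp c)" and fd: "finite (fsupp d)"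
  shows "ev sR F c = ev sR F d"
proof -
  have rel: "finite (fsupp w) \<and> ev sR F w = 0" if "w \<in> tens3_rel s" for w
    using that unfolding tens3_rel_def
    by (elim UnE CollectE exE conjE)
       (simp_all add: finite_fsupp_intros ev_diff[OF sR] ev_delta[OF sR] ev_scale[OF sR] a1 a2 a3 a4 a5 a6)
  have span: "finite (fsupp x) \<and> ev sR F x = 0" if "x \<in> module.span fs_scale (tens3_rel s)" for x
    apply (rule module.span_induct_alt[OF module_fs that])
    subgoal by (simp add: ev_def)
    subgoal using rel ev_rel_step[OF sR] by blast
    done
  have "ev sR F (c - d) = 0" using span t unfolding teq3_def kspan_span by blast
  then show ?thesis using ev_diff[OF sR fc fd] by simp
qed

section \<open>Normal form in H (x) H via a dual basis\<close>

lemma teq_zero_of: "teq sM sN M N a (a + a) \<Longrightarrow> teq sM sN M N a 0"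
  unfolding teq_def kspan_span using module.span_neg[OF module_fs] by fastforce

lemma delta_zero1: "n \<in> N \<Longrightarrow> 0 \<in> M \<Longrightarrow> teq sM sN M N (fs_delta (0, n)) 0"
  by (rule teq_zero_of) (use teq_delta_add1[of 0 M 0 n N sM sN] in simp)

lemma delta_zero2: "m \<in> M \<Longrightarrow> 0 \<in> N \<Longrightarrow> teq sM sN M N (fs_delta (m, 0)) 0"
  by (rule teq_zero_of) (use teq_delta_add2[of m M 0 N 0 sM sN] in simp)

lemma delta_sum1:
  "teq sM sN UNIV UNIV (fs_delta (\<Sum>i\<in>I. x i, y)) (\<Sum>i\<in>I. fs_delta (x i, y))"
proof (induct I rule: infinite_finite_induct)
  case (infinite A) then show ?case using delta_zero1[where M=UNIV and N=UNIV and n=y and sM=sM and sN=sN] by (simp add: zero_fun_def)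
next
  case empty then show ?case using delta_zero1[where M=UNIV and N=UNIV and n=y and sM=sM and sN=sN] by (simp add: zero_fun_def)
next
  case (insert j F)
  have "teq sM sN UNIV UNIV (fs_delta (x j + (\<Sum>i\<in>F. x i), y)) (fs_delta (x j, y) + fs_delta (\<Sum>i\<in>F. x i, y))"
    by (rule teq_delta_add1) auto
  also have "teq sM sN UNIV UNIV \<dots> (fs_delta (x j, y) + (\<Sum>i\<in>F. fs_delta (x i, y)))"
    by (rule teq_add[OF teq_refl insert(3)])
  finally show ?case by (simp only: sum.insert[OF insert(1,2)])
qed

lemma delta_sum2:
  "teq sM sN UNIV UNIV (fs_delta (x, \<Sum>i\<in>I. y i)) (\<Sum>i\<in>I. fs_delta (x, y i))"
proof (induct I rule: infinite_finite_induct)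
  case (infinite A) then show ?case using delta_zero2[where M=UNIV and N=UNIV and m=x and sM=sM and sN=sN] by (simp add: zero_fun_def)
next
  case empty then show ?case using delta_zero2[where M=UNIV and N=UNIV and m=x and sM=sM and sN=sN] by (simp add: zero_fun_def)
next
  case (insert j F)
  have "teq sM sN UNIV UNIV (fs_delta (x, y j + (\<Sum>i\<in>F. y i))) (fs_delta (x, y j) + fs_delta (x, \<Sum>i\<in>F. y i))"
    by (rule teq_delta_add2) auto
  also have "teq sM sN UNIV UNIV \<dots> (fs_delta (x, y j) + (\<Sum>i\<in>F. fs_delta (x, y i)))"
    by (rule teq_add[OF teq_refl insert(3)])
  finally show ?case by (simp only: sum.insert[OF insert(1,2)])
qed

lemma fs_decomp:
  assumes fc: "finite (fsupp (c :: 'a \<Rightarrow> 'k::comm_ring_1))"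
  shows "c = (\<Sum>z\<in>fsupp c. fs_scale (c z) (fs_delta z))"
proof (rule ext)
  fix x
  have "(\<Sum>z\<in>fsupp c. fs_scale (c z) (fs_delta z)) x = (\<Sum>z\<in>fsupp c. if z = x then c z else 0)"
    unfolding sum_apply_fun by (intro sum.cong) (auto simp: fs_scale_def fs_delta_def)
  also have "\<dots> = c x" using sum.delta[OF fc, of x c] by (auto simp: fsupp_def)
  finally show "c x = (\<Sum>z\<in>fsupp c. fs_scale (c z) (fs_delta z)) x" by simp
qed

lemma delta_nf:
  assumes "module s" "\<And>x. x = (\<Sum>i<n. s (f i x) (e i))"
  shows "teq s s UNIV UNIV (fs_delta z) (\<Sum>i<n. fs_delta (e i, (case z of (x, y) \<Rightarrow> s (f i x) y)))"
proof -
  obtain x y where z: "z = (x, y)" by (cases z)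
  have "teq s s UNIV UNIV (fs_delta (x, y)) (fs_delta (\<Sum>i<n. s (f i x) (e i), y))"
    using assms(2)[of x] by (simp add: teq_refl)
  also have "teq s s UNIV UNIV (fs_delta (\<Sum>i<n. s (f i x) (e i), y)) (\<Sum>i<n. fs_delta (s (f i x) (e i), y))"
    by (rule delta_sum1)
  also have "teq s s UNIV UNIV (\<Sum>i<n. fs_delta (s (f i x) (e i), y)) (\<Sum>i<n. fs_scale (f i x) (fs_delta (e i, y)))"
    by (rule teq_sum) (rule teq_delta_scale1, auto)
  also have "teq s s UNIV UNIV (\<Sum>i<n. fs_scale (f i x) (fs_delta (e i, y))) (\<Sum>i<n. fs_delta (e i, s (f i x) y))"
    by (rule teq_sum) (rule teq_sym, rule teq_delta_scale2, auto)
  finally show ?thesis unfolding z by simp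
qed

lemma tensor_nf:
  assumes s: "module s" and b: "\<And>x. x = (\<Sum>i<n. s (f i x) (e i))" and fc: "finite (fsupp c)"
  shows "teq s s UNIV UNIV c (\<Sum>i<n. fs_delta (e i, ev s (\<lambda>(x, y). s (f i x) y) c))"
proof -
  let ?G = "\<lambda>i z. (case z of (x, y) \<Rightarrow> s (f i x) y)"
  have eqX: "(\<Sum>z\<in>fsupp c. fs_scale (c z) (fs_delta z)) = c" by (rule fs_decomp[OF fc, symmetric])
  have "teq s s UNIV UNIV c (\<Sum>z\<in>fsupp c. fs_scale (c z) (fs_delta z))"
    by (simp only: eqX teq_refl)
  also have "teq s s UNIV UNIV (\<Sum>z\<in>fsupp c. fs_scale (c z) (fs_delta z))
      (\<Sum>z\<in>fsupp c. fs_scale (c z) (\<Sum>i<n. fs_delta (e i, ?G i z)))"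
    by (rule teq_sum, rule teq_scale, rule delta_nf[OF s b])
  also have "(\<Sum>z\<in>fsupp c. fs_scale (c z) (\<Sum>i<n. fs_delta (e i, ?G i z)))
      = (\<Sum>i<n. \<Sum>z\<in>fsupp c. fs_scale (c z) (fs_delta (e i, ?G i z)))"
    by (simp only: fs_scale_sum sum.swap[of _ "fsupp c"])
  also have "teq s s UNIV UNIV (\<Sum>i<n. \<Sum>z\<in>fsupp c. fs_scale (c z) (fs_delta (e i, ?G i z)))
      (\<Sum>i<n. \<Sum>z\<in>fsupp c. fs_delta (e i, s (c z) (?G i z)))"
    by (rule teq_sum, rule teq_sum, rule teq_sym, rule teq_delta_scale2, auto)
  also have "teq s s UNIV UNIV (\<Sum>i<n. \<Sum>z\<in>fsupp c. fs_delta (e i, s (c z) (?G i z)))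
      (\<Sum>i<n. fs_delta (e i, \<Sum>z\<in>fsupp c. s (c z) (?G i z)))"
    by (rule teq_sum, rule teq_sym, rule delta_sum2)
  also have "(\<Sum>i<n. fs_delta (e i, \<Sum>z\<in>fsupp c. s (c z) (?G i z)))
     = (\<Sum>i<n. fs_delta (e i, ev s (\<lambda>(x, y). s (f i x) y) c))"
    by (simp only: ev_def)
  finally show ?thesis .
qed

lemma teq_by_ev:
  assumes s: "module s" and b: "\<And>x. x = (\<Sum>i<n. s (f i x) (e i))"
    and fc: "finite (fsupp c)" and fd: "finite (fsupp d)"
    and eq: "\<And>i. i < n \<Longrightarrow> ev s (\<lambda>(x, y). s (f i x) y) c = ev s (\<lambda>(x, y). s (f i x) y) d"
  shows "teq s s UNIV UNIV c d"
proof -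
  have eqs: "(\<Sum>i<n. fs_delta (e i, ev s (\<lambda>(x, y). s (f i x) y) c)) = (\<Sum>i<n. fs_delta (e i, ev s (\<lambda>(x, y). s (f i x) y) d))"
    using eq by (intro sum.cong) auto
  show ?thesis
    by (rule teq_trans[OF tensor_nf[OF s b fc, unfolded eqs] teq_sym[OF tensor_nf[OF s b fd]]])
qed





section \<open>Sweedler calculus\<close>

lemma tmult_push:
  "tmult c d z = (\<Sum>i\<in>{i \<in> fsupp c \<times> fsupp d. (\<lambda>(p, q). (fst p * fst q, snd p * snd q)) i = z}.
                    (\<lambda>(p, q). c p * d q) i)"
proof -
  obtain u v where z: "z = (u, v)" by (cases z)
  show ?thesis
    unfolding z tmult_def prod.case by (rule sum.cong) (auto simp: fsupp_def)
qed

locale hopf_ctx =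
  fixes s :: "'k::comm_ring_1 \<Rightarrow> 'h::ring_1 \<Rightarrow> 'h"
    and D :: "'h \<Rightarrow> ('h \<times> 'h \<Rightarrow> 'k)"
    and eps :: "'h \<Rightarrow> 'k"
    and S :: "'h \<Rightarrow> 'h"
  assumes hopf: "hopf_algebra s D eps S"
begin

lemma ms: "module s"
  using hopf unfolding hopf_algebra_def k_algebra_def by blast

lemma alg1: "s r (x * y) = s r x * y" and alg2: "s r (x * y) = x * s r y"
  using hopf unfolding hopf_algebra_def k_algebra_def by blast+

lemma finD: "finite (fsupp (D a))"
  using hopf unfolding hopf_algebra_def by blast

lemma Dadd: "teq s s UNIV UNIV (D (a + b)) (D a + D b)"
  and Dscale: "teq s s UNIV UNIV (D (s r a)) (fs_scale r (D a))"
  and Dmult: "teq s s UNIV UNIV (D (a * b)) (tmult (D a) (D b))"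
  and Done: "teq s s UNIV UNIV (D 1) (fs_delta (1, 1))"
  using hopf unfolding hopf_algebra_def by blast+

lemma coassoc: "teq3 s
          (\<lambda>(u, v, w). \<Sum>x\<in>{x. D a (x, w) \<noteq> 0}. D a (x, w) * D x (u, v))
          (\<lambda>(u, v, w). \<Sum>y\<in>{y. D a (u, y) \<noteq> 0}. D a (u, y) * D y (v, w))"
  using hopf unfolding hopf_algebra_def by blast

lemma eps_hom: "module_hom s (*) eps"
  and eps_mult: "eps (a * b) = eps a * eps b" and eps_one: "eps 1 = 1"
  and counit1: "(\<Sum>(x, y)\<in>fsupp (D a). s (D a (x, y) * eps x) y) = a"
  and counit2: "(\<Sum>(x, y)\<in>fsupp (D a). s (D a (x, y) * eps y) x) = a"
  and S_hom: "module_hom s s S"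
  and anti1: "(\<Sum>(x, y)\<in>fsupp (D a). s (D a (x, y)) (S x * y)) = s (eps a) 1"
  and anti2: "(\<Sum>(x, y)\<in>fsupp (D a). s (D a (x, y)) (x * S y)) = s (eps a) 1"
  using hopf unfolding hopf_algebra_def by blast+

lemma eps_add: "eps (x + y) = eps x + eps y" and eps_scale: "eps (s r x) = r * eps x"
  using eps_hom unfolding module_hom_iff by auto

lemma S_add: "S (x + y) = S x + S y" and S_scale: "S (s r x) = s r (S x)"
  using S_hom unfolding module_hom_iff by auto

lemma sc_add1: "s r (x + y) = s r x + s r y" and sc_add2: "s (r + r') x = s r x + s r' x"
  and sc_sc: "s r (s r' x) = s (r * r') x" and sc_one: "s 1 x = x"
  and sc_zero1: "s 0 x = 0" and sc_zero2: "s r 0 = 0"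
  by (simp_all add: module.scale_right_distrib[OF ms] module.scale_left_distrib[OF ms]
        module.scale_scale[OF ms] module.scale_one[OF ms] module.scale_zero_left[OF ms]
        module.scale_zero_right[OF ms])

definition Dl :: "('h \<Rightarrow> 'h \<Rightarrow> 'h) \<Rightarrow> 'h \<Rightarrow> 'h" where
  "Dl F a = ev s (\<lambda>(x, y). F x y) (D a)"

definition bil :: "('h \<Rightarrow> 'h \<Rightarrow> 'h) \<Rightarrow> bool" where
  "bil F \<longleftrightarrow> (\<forall>x x' y. F (x + x') y = F x y + F x' y) \<and> (\<forall>x y y'. F x (y + y') = F x y + F x y')
     \<and> (\<forall>r x y. F (s r x) y = s r (F x y)) \<and> (\<forall>r x y. F x (s r y) = s r (F x y))"

definition lin :: "('h \<Rightarrow> 'h) \<Rightarrow> bool" where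
  "lin L \<longleftrightarrow> (\<forall>x y. L (x + y) = L x + L y) \<and> (\<forall>r x. L (s r x) = s r (L x))"

definition tril :: "('h \<Rightarrow> 'h \<Rightarrow> 'h \<Rightarrow> 'h) \<Rightarrow> bool" where
  "tril G \<longleftrightarrow> (\<forall>x x' y z. G (x + x') y z = G x y z + G x' y z)
     \<and> (\<forall>x y y' z. G x (y + y') z = G x y z + G x y' z)
     \<and> (\<forall>x y z z'. G x y (z + z') = G x y z + G x y z')
     \<and> (\<forall>r x y z. G (s r x) y z = s r (G x y z))
     \<and> (\<forall>r x y z. G x (s r y) z = s r (G x y z))
     \<and> (\<forall>r x y z. G x y (s r z) = s r (G x y z))"

lemma lin_hom: "lin L \<Longrightarrow> module_hom s s L"
  unfolding lin_def module_hom_iff using ms by blast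

lemma Dl_lin: "lin L \<Longrightarrow> L (Dl F a) = Dl (\<lambda>x y. L (F x y)) a"
  unfolding Dl_def by (subst ev_hom[OF lin_hom]) (auto intro!: ev_cong)

lemma Dl_fadd: "Dl (\<lambda>x y. F x y + G x y) a = Dl F a + Dl G a"
  unfolding Dl_def ev_def by (simp add: case_prod_beta sc_add1 sum.distrib)

lemma Dl_fscale: "Dl (\<lambda>x y. s r (F x y)) a = s r (Dl F a)"
  unfolding Dl_def ev_def by (simp add: case_prod_beta module.scale_sum_right[OF ms] sc_sc mult.commute)

lemma Dl_teq:
  assumes "bil F" "teq s s UNIV UNIV c d" "finite (fsupp c)" "finite (fsupp d)"
  shows "ev s (\<lambda>(x, y). F x y) c = ev s (\<lambda>(x, y). F x y) d"
  using assms(1) by (intro teq_ev[OF ms _ _ _ _ assms(2-4)]) (auto simp: bil_def)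

lemma Dl_add: "bil F \<Longrightarrow> Dl F (a + b) = Dl F a + Dl F b"
  unfolding Dl_def
  by (subst Dl_teq[OF _ Dadd]) (auto simp: finD finite_fsupp_add ev_add[OF ms])

lemma Dl_scale: "bil F \<Longrightarrow> Dl F (s r a) = s r (Dl F a)"
  unfolding Dl_def
  by (subst Dl_teq[OF _ Dscale]) (auto simp: finD finite_fsupp_scale ev_scale[OF ms])

lemma Dl_one: "bil F \<Longrightarrow> Dl F 1 = F 1 1"
  unfolding Dl_def
  by (subst Dl_teq[OF _ Done]) (auto simp: finD finite_fsupp_delta ev_delta[OF ms])

lemma Dl_is_lin: "bil F \<Longrightarrow> lin (Dl F)"
  unfolding lin_def by (simp add: Dl_add Dl_scale)

lemma ev_tmult:
  assumes "finite (fsupp c)" "finite (fsupp d)"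
  shows "ev s G (tmult c d) = (\<Sum>p\<in>fsupp c. \<Sum>q\<in>fsupp d. s (c p * d q) (G (fst p * fst q, snd p * snd q)))"
proof -
  have "ev s G (tmult c d) = (\<Sum>i\<in>fsupp c \<times> fsupp d. s ((\<lambda>(p, q). c p * d q) i)
           (G ((\<lambda>(p, q). (fst p * fst q, snd p * snd q)) i)))"
    by (rule ev_push[OF ms _ tmult_push]) (use assms in auto)
  also have "\<dots> = (\<Sum>p\<in>fsupp c. \<Sum>q\<in>fsupp d. s (c p * d q) (G (fst p * fst q, snd p * snd q)))"
    by (simp only: sum.cartesian_product) (simp add: split_beta)
  finally show ?thesis .
qed

lemma finite_tmult: "finite (fsupp c) \<Longrightarrow> finite (fsupp d) \<Longrightarrow> finite (fsupp (tmult c d))"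
  by (rule finite_fsupp_push[OF _ tmult_push]) auto

lemma Dl_mult:
  assumes "bil F"
  shows "Dl F (a * b) = Dl (\<lambda>x y. Dl (\<lambda>x' y'. F (x * x') (y * y')) b) a"
proof -
  have "Dl F (a * b) = ev s (\<lambda>(x, y). F x y) (tmult (D a) (D b))"
    unfolding Dl_def by (rule Dl_teq[OF assms Dmult finD finite_tmult[OF finD finD]])
  also have "\<dots> = (\<Sum>p\<in>fsupp (D a). \<Sum>q\<in>fsupp (D b). s (D a p * D b q) (F (fst p * fst q) (snd p * snd q)))"
    by (simp add: ev_tmult finD)
  also have "\<dots> = Dl (\<lambda>x y. Dl (\<lambda>x' y'. F (x * x') (y * y')) b) a"
    unfolding Dl_def ev_def
    by (intro sum.cong refl) (auto simp: module.scale_sum_right[OF ms] sc_sc case_prod_beta)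
  finally show ?thesis .
qed

lemma Dl_swap: "Dl (\<lambda>x y. Dl (\<lambda>u v. K x y u v) b) a = Dl (\<lambda>u v. Dl (\<lambda>x y. K x y u v) a) b"
  unfolding Dl_def ev_def
  by (simp add: case_prod_beta module.scale_sum_right[OF ms] sc_sc mult.commute sum.swap[of _ "fsupp (D a)"])

lemma Dl_counit1: "Dl (\<lambda>x y. s (eps x) y) a = a"
  using counit1[of a] unfolding Dl_def ev_def by (simp add: case_prod_beta sc_sc)

lemma Dl_counit2: "Dl (\<lambda>x y. s (eps y) x) a = a"
  using counit2[of a] unfolding Dl_def ev_def by (simp add: case_prod_beta sc_sc)

lemma Dl_anti1: "Dl (\<lambda>x y. S x * y) a = s (eps a) 1"
  using anti1[of a] unfolding Dl_def ev_def by (simp add: case_prod_beta)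

lemma Dl_anti2: "Dl (\<lambda>x y. x * S y) a = s (eps a) 1"
  using anti2[of a] unfolding Dl_def ev_def by (simp add: case_prod_beta)


lemma finite_col1: "finite {x. D a (x, w) \<noteq> 0}"
  by (rule finite_subset[OF _ finite_imageI[OF finD[of a], of fst]]) (force simp: fsupp_def)

lemma finite_col2: "finite {y. D a (u, y) \<noteq> 0}"
  by (rule finite_subset[OF _ finite_imageI[OF finD[of a], of snd]]) (force simp: fsupp_def)

lemma c3_push:
  "(case z of (u, v, w) \<Rightarrow> \<Sum>x\<in>{x. D a (x, w) \<noteq> 0}. D a (x, w) * D x (u, v))
   = (\<Sum>i\<in>{i \<in> Sigma (fsupp (D a)) (\<lambda>p. fsupp (D (fst p))). (\<lambda>(p, q). (fst q, snd q, snd p)) i = z}.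
        (\<lambda>(p, q). D a p * D (fst p) q) i)"
proof -
  obtain u v w where z: "z = (u, v, w)" by (cases z) auto
  let ?X = "{x. D a (x, w) \<noteq> 0}"
  let ?X' = "{x. D a (x, w) \<noteq> 0 \<and> D x (u, v) \<noteq> 0}"
  have "(\<Sum>x\<in>?X. D a (x, w) * D x (u, v)) = (\<Sum>x\<in>?X'. D a (x, w) * D x (u, v))"
    by (rule sum.mono_neutral_right[OF finite_col1]) auto
  also have "\<dots> = (\<Sum>i\<in>(\<lambda>x. ((x, w), (u, v))) ` ?X'. (\<lambda>(p, q). D a p * D (fst p) q) i)"
    by (subst sum.reindex) (auto simp: inj_on_def)
  also have "(\<lambda>x. ((x, w), (u, v))) ` ?X' = {i \<in> Sigma (fsupp (D a)) (\<lambda>p. fsupp (D (fst p))). (\<lambda>(p, q). (fst q, snd q, snd p)) i = z}"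
    unfolding z by (auto simp: fsupp_def image_iff)
  finally show ?thesis unfolding z by simp
qed

lemma d3_push:
  "(case z of (u, v, w) \<Rightarrow> \<Sum>y\<in>{y. D a (u, y) \<noteq> 0}. D a (u, y) * D y (v, w))
   = (\<Sum>i\<in>{i \<in> Sigma (fsupp (D a)) (\<lambda>p. fsupp (D (snd p))). (\<lambda>(p, q). (fst p, fst q, snd q)) i = z}.
        (\<lambda>(p, q). D a p * D (snd p) q) i)"
proof -
  obtain u v w where z: "z = (u, v, w)" by (cases z) auto
  let ?X = "{y. D a (u, y) \<noteq> 0}"
  let ?X' = "{y. D a (u, y) \<noteq> 0 \<and> D y (v, w) \<noteq> 0}"
  have "(\<Sum>y\<in>?X. D a (u, y) * D y (v, w)) = (\<Sum>y\<in>?X'. D a (u, y) * D y (v, w))"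
    by (rule sum.mono_neutral_right[OF finite_col2]) auto
  also have "\<dots> = (\<Sum>i\<in>(\<lambda>y. ((u, y), (v, w))) ` ?X'. (\<lambda>(p, q). D a p * D (snd p) q) i)"
    by (subst sum.reindex) (auto simp: inj_on_def)
  also have "(\<lambda>y. ((u, y), (v, w))) ` ?X' = {i \<in> Sigma (fsupp (D a)) (\<lambda>p. fsupp (D (snd p))). (\<lambda>(p, q). (fst p, fst q, snd q)) i = z}"
    unfolding z by (auto simp: fsupp_def image_iff)
  finally show ?thesis unfolding z by simp
qed

lemma Dl_coassoc:
  assumes "tril G"
  shows "Dl (\<lambda>x w. Dl (\<lambda>u v. G u v w) x) a = Dl (\<lambda>u y. Dl (\<lambda>v w. G u v w) y) a"
proof -
  let ?c3 = "\<lambda>(u, v, w). \<Sum>x\<in>{x. D a (x, w) \<noteq> 0}. D a (x, w) * D x (u, v)"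
  let ?d3 = "\<lambda>(u, v, w). \<Sum>y\<in>{y. D a (u, y) \<noteq> 0}. D a (u, y) * D y (v, w)"
  let ?G3 = "\<lambda>(u, v, w). G u v w"
  have fA: "finite (Sigma (fsupp (D a)) (\<lambda>p. fsupp (D (fst p))))"
    by (rule finite_SigmaI[OF finD finD])
  have fB: "finite (Sigma (fsupp (D a)) (\<lambda>p. fsupp (D (snd p))))"
    by (rule finite_SigmaI[OF finD finD])
  have ec: "ev s ?G3 ?c3 = Dl (\<lambda>x w. Dl (\<lambda>u v. G u v w) x) a"
  proof -
    have "ev s ?G3 ?c3 = (\<Sum>i\<in>Sigma (fsupp (D a)) (\<lambda>p. fsupp (D (fst p))).
        s ((\<lambda>(p, q). D a p * D (fst p) q) i) (?G3 ((\<lambda>(p, q). (fst q, snd q, snd p)) i)))"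
      by (rule ev_push[OF ms fA c3_push])
    also have "\<dots> = (\<Sum>p\<in>fsupp (D a). \<Sum>q\<in>fsupp (D (fst p)). s (D a p * D (fst p) q) (G (fst q) (snd q) (snd p)))"
      by (subst sum.Sigma[OF finD]) (auto simp: finD split_beta)
    also have "\<dots> = Dl (\<lambda>x w. Dl (\<lambda>u v. G u v w) x) a"
      unfolding Dl_def ev_def
      by (intro sum.cong refl) (auto simp: module.scale_sum_right[OF ms] sc_sc split_beta)
    finally show ?thesis .
  qed
  have ed: "ev s ?G3 ?d3 = Dl (\<lambda>u y. Dl (\<lambda>v w. G u v w) y) a"
  proof -
    have "ev s ?G3 ?d3 = (\<Sum>i\<in>Sigma (fsupp (D a)) (\<lambda>p. fsupp (D (snd p))).
        s ((\<lambda>(p, q). D a p * D (snd p) q) i) (?G3 ((\<lambda>(p, q). (fst p, fst q, snd q)) i)))"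
      by (rule ev_push[OF ms fB d3_push])
    also have "\<dots> = (\<Sum>p\<in>fsupp (D a). \<Sum>q\<in>fsupp (D (snd p)). s (D a p * D (snd p) q) (G (fst p) (fst q) (snd q)))"
      by (subst sum.Sigma[OF finD]) (auto simp: finD split_beta)
    also have "\<dots> = Dl (\<lambda>u y. Dl (\<lambda>v w. G u v w) y) a"
      unfolding Dl_def ev_def
      by (intro sum.cong refl) (auto simp: module.scale_sum_right[OF ms] sc_sc split_beta)
    finally show ?thesis .
  qed
  have "ev s ?G3 ?c3 = ev s ?G3 ?d3"
    by (rule teq3_ev[OF ms _ _ _ _ _ _ coassoc finite_fsupp_push[OF fA c3_push] finite_fsupp_push[OF fB d3_push]])
       (use assms in \<open>auto simp: tril_def\<close>)
  then show ?thesis using ec ed by simp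
qed


lemma mult_sc_left: "s r x * y = s r (x * y)"
  by (rule alg1[symmetric])
lemma mult_sc_right: "x * s r y = s r (x * y)"
  by (rule alg2[symmetric])

lemma Dl_fscale_l: "Dl (\<lambda>x y. s (r * g x y) (F x y)) a = s r (Dl (\<lambda>x y. s (g x y) (F x y)) a)"
  by (simp add: Dl_fscale[symmetric] sc_sc)
lemma Dl_fscale_r: "Dl (\<lambda>x y. s (g x y * r) (F x y)) a = s r (Dl (\<lambda>x y. s (g x y) (F x y)) a)"
  by (simp add: Dl_fscale[symmetric] sc_sc mult.commute)

lemmas HS = Dl_fscale_l Dl_fscale_r sc_add1 sc_add2 sc_sc mult_sc_left mult_sc_right S_add S_scale eps_add eps_scale
  distrib_left distrib_right Dl_fadd Dl_fscale mult.assoc mult.commute mult.left_commute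

lemma S_lin: "lin S" unfolding lin_def by (simp add: S_add S_scale)

lemma Dl_cong2: "(\<And>x y. F x y = G x y) \<Longrightarrow> Dl F a = Dl G a"
proof -
  assume "\<And>x y. F x y = G x y"
  then have "F = G" by (intro ext)
  then show ?thesis by simp
qed

lemma Dl_counit_lin1: "lin L \<Longrightarrow> Dl (\<lambda>x y. s (eps x) (L y)) a = L a"
  using Dl_lin[of L "\<lambda>x y. s (eps x) y" a] Dl_counit1[of a] by (simp add: lin_def)

lemma Dl_counit_lin2: "lin L \<Longrightarrow> Dl (\<lambda>x y. s (eps y) (L x)) a = L a"
  using Dl_lin[of L "\<lambda>x y. s (eps y) x" a] Dl_counit2[of a] by (simp add: lin_def)

lemma lin_lmult: "lin (\<lambda>t. z * t)" and lin_rmult: "lin (\<lambda>t. t * z)" and lin_mid: "lin (\<lambda>t. z * t * w)"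
  unfolding lin_def by (simp_all add: HS)

lemma S_mult: "S (a * b) = S b * S a"
proof -
  have inner: "s (eps (x2 * y2)) z = Dl (\<lambda>u' v'. Dl (\<lambda>u v. z * u * u' * S v' * S v) x2) y2" for z x2 y2
  proof -
    have "Dl (\<lambda>u' v'. z * u * u' * S v' * S v) y2 = s (eps y2) (z * u * S v)" for u v
    proof -
      have "Dl (\<lambda>u' v'. z * u * u' * S v' * S v) y2 = z * u * Dl (\<lambda>u' v'. u' * S v') y2 * S v"
        using Dl_lin[OF lin_mid[of "z * u" "S v"], of "\<lambda>u' v'. u' * S v'" y2] by (simp add: mult.assoc)
      also have "\<dots> = s (eps y2) (z * u * S v)" by (simp add: Dl_anti2 mult_sc_left mult_sc_right)
      finally show ?thesis .
    qed
    then have "Dl (\<lambda>u v. Dl (\<lambda>u' v'. z * u * u' * S v' * S v) y2) x2 = Dl (\<lambda>u v. s (eps y2) (z * u * S v)) x2"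
      by (intro Dl_cong2) simp
    also have "\<dots> = s (eps y2) (z * Dl (\<lambda>u v. u * S v) x2)"
      using Dl_lin[OF lin_lmult[of z], of "\<lambda>u v. u * S v" x2] by (simp add: Dl_fscale mult.assoc)
    also have "\<dots> = s (eps (x2 * y2)) z" by (simp add: Dl_anti2 mult_sc_right sc_sc eps_mult mult.commute)
    also have "Dl (\<lambda>u v. Dl (\<lambda>u' v'. z * u * u' * S v' * S v) y2) x2
        = Dl (\<lambda>u' v'. Dl (\<lambda>u v. z * u * u' * S v' * S v) x2) y2"
      by (rule Dl_swap)
    finally show ?thesis by (rule sym)
  qed
  define T where "T x1 y1 u y12 w v = S (x1 * y1) * u * y12 * S w * S v" for x1 y1 u y12 w v
  have "S (a * b) = Dl (\<lambda>x y. s (eps y) (S x)) (a * b)"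
    by (rule Dl_counit_lin2[OF S_lin, symmetric])
  also have "\<dots> = Dl (\<lambda>x1 x2. Dl (\<lambda>y1 y2. s (eps (x2 * y2)) (S (x1 * y1))) b) a"
    by (rule Dl_mult) (simp add: bil_def HS)
  also have "\<dots> = Dl (\<lambda>x1 x2. Dl (\<lambda>y1 y2. Dl (\<lambda>u' v'. Dl (\<lambda>u v. T x1 y1 u u' v' v) x2) y2) b) a"
    unfolding T_def by (simp only: inner)
  also have "\<dots> = Dl (\<lambda>x1 x2. Dl (\<lambda>y w. Dl (\<lambda>y1 y12. Dl (\<lambda>u v. T x1 y1 u y12 w v) x2) y) b) a"
    by (intro Dl_cong2 Dl_coassoc[symmetric]) (simp add: tril_def T_def HS)
  also have "\<dots> = Dl (\<lambda>x1 x2. Dl (\<lambda>y w. Dl (\<lambda>u v. Dl (\<lambda>y1 y12. T x1 y1 u y12 w v) y) x2) b) a"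
    by (intro Dl_cong2 Dl_swap)
  also have "\<dots> = Dl (\<lambda>x1 x2. Dl (\<lambda>u v. Dl (\<lambda>y w. Dl (\<lambda>y1 y12. T x1 y1 u y12 w v) y) b) x2) a"
    by (intro Dl_cong2 Dl_swap)
  also have "\<dots> = Dl (\<lambda>x v. Dl (\<lambda>x1 u. Dl (\<lambda>y w. Dl (\<lambda>y1 y12. T x1 y1 u y12 w v) y) b) x) a"
    by (rule Dl_coassoc[symmetric, of "\<lambda>x1 u v. Dl (\<lambda>y w. Dl (\<lambda>y1 y12. T x1 y1 u y12 w v) y) b"])
       (simp add: tril_def T_def HS)
  also have "\<dots> = Dl (\<lambda>x v. Dl (\<lambda>y w. Dl (\<lambda>x1 u. Dl (\<lambda>y1 y12. T x1 y1 u y12 w v) y) x) b) a"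
    by (intro Dl_cong2 Dl_swap)
  also have "\<dots> = Dl (\<lambda>x v. Dl (\<lambda>y w. Dl (\<lambda>p q. S p * q * (S w * S v)) (x * y)) b) a"
  proof (intro Dl_cong2)
    fix x v y w
    have "Dl (\<lambda>p q. S p * q * (S w * S v)) (x * y) =
        Dl (\<lambda>x1 x2. Dl (\<lambda>y1 y2. S (x1 * y1) * (x2 * y2) * (S w * S v)) y) x"
      by (rule Dl_mult) (simp add: bil_def HS)
    then show "Dl (\<lambda>x1 u. Dl (\<lambda>y1 y12. T x1 y1 u y12 w v) y) x = Dl (\<lambda>p q. S p * q * (S w * S v)) (x * y)"
      by (simp add: T_def mult.assoc)
  qed
  also have "\<dots> = Dl (\<lambda>x v. Dl (\<lambda>y w. s (eps x * eps y) (S w * S v)) b) a"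
  proof (intro Dl_cong2)
    fix x v y w
    have "Dl (\<lambda>p q. S p * q * (S w * S v)) (x * y) = Dl (\<lambda>p q. S p * q) (x * y) * (S w * S v)"
      using Dl_lin[OF lin_rmult[of "S w * S v"], of "\<lambda>p q. S p * q" "x * y"] by simp
    also have "\<dots> = s (eps x * eps y) (S w * S v)"
      by (simp add: Dl_anti1 eps_mult mult_sc_left)
    finally show "Dl (\<lambda>p q. S p * q * (S w * S v)) (x * y) = s (eps x * eps y) (S w * S v)" .
  qed
  also have "\<dots> = Dl (\<lambda>x v. s (eps x) (Dl (\<lambda>y w. s (eps y) (S w)) b * S v)) a"
  proof (intro Dl_cong2)
    fix x v
    have "Dl (\<lambda>y w. s (eps x * eps y) (S w * S v)) b = s (eps x) (Dl (\<lambda>y w. s (eps y) (S w * S v)) b)"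
      by (simp add: Dl_fscale[symmetric] sc_sc)
    also have "Dl (\<lambda>y w. s (eps y) (S w * S v)) b = Dl (\<lambda>y w. s (eps y) (S w)) b * S v"
      using Dl_lin[OF lin_rmult[of "S v"], of "\<lambda>y w. s (eps y) (S w)" b] by (simp add: mult_sc_left)
    finally show "Dl (\<lambda>y w. s (eps x * eps y) (S w * S v)) b = s (eps x) (Dl (\<lambda>y w. s (eps y) (S w)) b * S v)" .
  qed
  also have "\<dots> = Dl (\<lambda>x v. s (eps x) (S b * S v)) a"
    by (simp only: Dl_counit_lin1[OF S_lin])
  also have "\<dots> = S b * S a"
    using Dl_counit_lin1[of "\<lambda>t. S b * S t" a] by (simp add: lin_def S_add S_scale distrib_left mult_sc_right)
  finally show ?thesis .
qed


lemma integral_casimir: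
  assumes lint: "\<And>a. a * t = s (eps a) t" and f: "module_hom s (*) f"
  shows "Dl (\<lambda>x y. s (f (a * x)) (S y)) t = Dl (\<lambda>x y. s (f x) (S y)) t * a"
proof -
  have fadd: "f (x + y) = f x + f y" and fsc: "f (s r x) = r * f x" for x y r
    using f unfolding module_hom_iff by auto
  define Phi where "Phi x = Dl (\<lambda>u v. s (f (x * u)) (S v)) t" for x
  define Psi where "Psi = Dl (\<lambda>x y. s (f x) (S y)) t"
  have linPhi: "lin Phi"
    unfolding lin_def Phi_def by (simp add: HS fadd fsc)
  have "Phi a = Dl (\<lambda>x y. s (eps y) (Phi x)) a"
    by (rule Dl_counit_lin2[OF linPhi, symmetric])
  also have "\<dots> = Dl (\<lambda>x y. Dl (\<lambda>u v. Phi x * S u * v) y) a"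
  proof (intro Dl_cong2)
    fix x y
    have "Dl (\<lambda>u v. Phi x * S u * v) y = Phi x * Dl (\<lambda>u v. S u * v) y"
      using Dl_lin[OF lin_lmult[of "Phi x"], of "\<lambda>u v. S u * v" y] by (simp add: mult.assoc)
    then show "s (eps y) (Phi x) = Dl (\<lambda>u v. Phi x * S u * v) y"
      by (simp add: Dl_anti1 mult_sc_right)
  qed
  also have "\<dots> = Dl (\<lambda>x w. Dl (\<lambda>u v. Phi u * S v * w) x) a"
    by (rule Dl_coassoc[symmetric, of "\<lambda>u v w. Phi u * S v * w"]) (simp add: tril_def HS linPhi[unfolded lin_def])
  also have "\<dots> = Dl (\<lambda>x w. s (eps x) (Psi * w)) a"
  proof (intro Dl_cong2)
    fix x w
    have "Dl (\<lambda>u v. Phi u * S v * w) x = Dl (\<lambda>u v. Dl (\<lambda>p q. s (f (u * p)) (S (v * q)) * w) t) x"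
    proof (intro Dl_cong2)
      fix u v
      have "Phi u * S v * w = Dl (\<lambda>p q. s (f (u * p)) (S q) * (S v * w)) t"
        unfolding Phi_def using Dl_lin[OF lin_rmult[of "S v * w"], of "\<lambda>p q. s (f (u * p)) (S q)" t]
        by (simp add: mult.assoc)
      then show "Phi u * S v * w = Dl (\<lambda>p q. s (f (u * p)) (S (v * q)) * w) t"
        by (simp add: S_mult mult_sc_left mult.assoc)
    qed
    also have "\<dots> = Dl (\<lambda>p q. s (f p) (S q) * w) (x * t)"
      by (rule Dl_mult[symmetric]) (simp add: bil_def HS fadd fsc)
    also have "\<dots> = s (eps x) (Dl (\<lambda>p q. s (f p) (S q) * w) t)"
      unfolding lint by (rule Dl_scale) (simp add: bil_def HS fadd fsc)
    also have "Dl (\<lambda>p q. s (f p) (S q) * w) t = Psi * w"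
      using Dl_lin[OF lin_rmult[of w], of "\<lambda>p q. s (f p) (S q)" t] unfolding Psi_def by simp
    finally show "Dl (\<lambda>u v. Phi u * S v * w) x = s (eps x) (Psi * w)" .
  qed
  also have "\<dots> = Psi * a"
    by (rule Dl_counit_lin1) (simp add: lin_def HS)
  finally show ?thesis unfolding Phi_def Psi_def .
qed

end


lemma ev_split: "ev sc (\<lambda>(x, y). F x y) c = (\<Sum>(x, y)\<in>fsupp c. sc (c (x, y)) (F x y))"
  unfolding ev_def by (simp add: split_beta)

lemma ev_split_mult: "ev (*) (\<lambda>(x, y). F x y) c = (\<Sum>(x, y)\<in>fsupp c. c (x, y) * F x y)"
  unfolding ev_def by (simp add: split_beta)

theorem theorem6p2:
  fixes sH :: "'k::comm_ring_1 \<Rightarrow> 'h::ring_1 \<Rightarrow> 'h"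
    and D :: "'h \<Rightarrow> ('h \<times> 'h \<Rightarrow> 'k)"
    and eps :: "'h \<Rightarrow> 'k"
    and S :: "'h \<Rightarrow> 'h"
    and sP :: "'k \<Rightarrow> 'p::ab_group_add \<Rightarrow> 'p"
    and psi :: "'h \<Rightarrow> 'p"
    and N :: "'h \<times> ('p \<Rightarrow> 'k) \<Rightarrow> 'k"
  assumes "hopf_algebra sH D eps S"
    and "fg_projective sH"
    and "invertible_module sP"
    and "frobenius_hom sH sP psi"
    and "\<forall>a. teq sH sP UNIV UNIV (tmap id psi (D a)) (fs_delta (1, psi a))"
    and "left_norm sH sP eps psi N"
  shows "separable_algebra sH \<longleftrightarrow>
           morita_invertible sP (\<lambda>x. \<Sum>(h, q)\<in>fsupp N. N (h, q) * eps h * q x)"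
proof -
  interpret H: hopf_ctx sH D eps S by (rule hopf_ctx.intro) (rule assms(1))
  obtain n :: nat and e f where A: "(\<forall>i<n. module_hom sH (*) (f i)) \<and> (\<forall>x. x = (\<Sum>i<n. sH (f i x) (e i)))"
    using conjunct2[OF assms(2)[unfolded fg_projective_def]] by iprover
  have fhom: "\<And>i. i < n \<Longrightarrow> module_hom sH (*) (f i)"
    by (rule A[THEN conjunct1, rule_format])
  have basis: "\<And>x. x = (\<Sum>i<n. sH (f i x) (e i))"
    by (rule A[THEN conjunct2, rule_format])
  have msP: "module sP" using assms(3) unfolding invertible_module_def fg_projective_def by blast
  have psi_hom: "module_hom sH sP psi" using assms(4) unfolding frobenius_hom_def by blast
  have psi_sc: "psi (sH r x) = sP r (psi x)" for r x using psi_hom unfolding module_hom_iff by blast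
  have finN: "finite (fsupp N)" and suppN: "fsupp N \<subseteq> UNIV \<times> kdual sP"
    and normeq: "\<And>a. (\<Sum>(h, q)\<in>fsupp N. N (h, q) * q (psi (a * h))) = eps a"
    and uniq: "\<And>N'. finite (fsupp N') \<Longrightarrow> fsupp N' \<subseteq> UNIV \<times> kdual sP
          \<Longrightarrow> (\<forall>a. (\<Sum>(h, q)\<in>fsupp N'. N' (h, q) * q (psi (a * h))) = eps a)
          \<Longrightarrow> teq sH fun_scale UNIV (kdual sP) N' N"
    using assms(6) unfolding left_norm_def by blast+
  have qhom: "module_hom sP (*) q" if "(h, q) \<in> fsupp N" for h q
    using suppN that unfolding kdual_def by blast
  have q_add: "q (x + y) = q x + q y" and q_sc: "q (sP r x) = r * q x" if "(h, q) \<in> fsupp N" for h q x y r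
    using qhom[OF that] unfolding module_hom_iff by blast+
  define q0 where "q0 x = (\<Sum>(h, q)\<in>fsupp N. N (h, q) * eps h * q x)" for x
  have q0_kdual: "q0 \<in> kdual sP"
    unfolding kdual_def module_hom_iff
  proof (intro CollectI conjI allI msP module_mult)
    fix x y
    show "q0 (x + y) = q0 x + q0 y"
      unfolding q0_def sum.distrib[symmetric]
      by (intro sum.cong refl) (auto simp: q_add algebra_simps)
  next
    fix r x
    show "q0 (sP r x) = r * q0 x"
      unfolding q0_def sum_distrib_left
      by (intro sum.cong refl) (auto simp: q_sc algebra_simps)
  qed
  have eps_sum_ev: "eps (ev sH F c) = ev (*) (\<lambda>z. eps (F z)) c" for F c
    by (rule ev_hom[OF H.eps_hom])
  show ?thesis
  proof
    assume "separable_algebra sH"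
    then obtain e0 where fin0: "finite (fsupp e0)"
      and mu: "(\<Sum>(x, y)\<in>fsupp e0. sH (e0 (x, y)) (x * y)) = 1"
      and cas: "\<And>a. teq sH sH UNIV UNIV (tmap (\<lambda>x. a * x) id e0) (tmap id (\<lambda>y. y * a) e0)"
      unfolding separable_algebra_def by blast
    define t' where "t' = ev sH (\<lambda>(x, y). sH (eps x) y) e0"
    have rint: "t' * b = sH (eps b) t'" for b
    proof -
      have "ev sH (\<lambda>(x, y). sH (eps x) y) (tmap (\<lambda>x. b * x) id e0)
          = ev sH (\<lambda>(x, y). sH (eps x) y) (tmap id (\<lambda>y. y * b) e0)"
        by (rule teq_ev[OF H.ms _ _ _ _ cas finite_fsupp_tmap[OF fin0] finite_fsupp_tmap[OF fin0]])
           (auto simp: H.eps_add H.eps_scale H.sc_add1 H.sc_add2 H.sc_sc mult.commute)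
      moreover have "ev sH (\<lambda>(x, y). sH (eps x) y) (tmap (\<lambda>x. b * x) id e0) = sH (eps b) t'"
        unfolding ev_tmap[OF H.ms fin0] t'_def ev_fun_scale[OF H.ms, symmetric]
        by (intro ev_cong) (auto simp: H.eps_mult H.sc_sc mult.commute)
      moreover have "ev sH (\<lambda>(x, y). sH (eps x) y) (tmap id (\<lambda>y. y * b) e0) = t' * b"
        unfolding ev_tmap[OF H.ms fin0] t'_def ev_hom[OF H.lin_hom[OF H.lin_rmult[of b]]]
        by (intro ev_cong) (auto simp: H.mult_sc_left)
      ultimately show ?thesis by simp
    qed
    have eps_t': "eps t' = 1"
    proof -
      have "eps t' = ev (*) (\<lambda>(x, y). eps x * eps y) e0"
        unfolding t'_def eps_sum_ev by (intro ev_cong) (auto simp: H.eps_scale)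
      also have "\<dots> = eps (ev sH (\<lambda>(x, y). x * y) e0)"
        unfolding eps_sum_ev by (intro ev_cong) (auto simp: H.eps_mult)
      also have "ev sH (\<lambda>(x, y). x * y) e0 = 1" using mu by (simp add: ev_split)
      finally show ?thesis by (simp add: H.eps_one)
    qed
    have "q0 (psi t') = 1"
    proof -
      have "1 = (\<Sum>(h, q)\<in>fsupp N. N (h, q) * q (psi (t' * h)))" using normeq[of t'] eps_t' by simp
      also have "\<dots> = q0 (psi t')"
        unfolding q0_def by (intro sum.cong refl) (auto simp: rint psi_sc q_sc)
      finally show ?thesis by simp
    qed
    then show "morita_invertible sP (\<lambda>x. \<Sum>(h, q)\<in>fsupp N. N (h, q) * eps h * q x)"
      unfolding morita_invertible_def using q0_kdual unfolding q0_def by blast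
  next
    assume "morita_invertible sP (\<lambda>x. \<Sum>(h, q)\<in>fsupp N. N (h, q) * eps h * q x)"
    then obtain p where q0p: "q0 p = 1" unfolding morita_invertible_def q0_def by blast
    define t where "t = ev sH (\<lambda>(h, q). sH (q p) h) N"
    have eps_t: "eps t = 1"
    proof -
      have "eps t = ev (*) (\<lambda>(h, q). q p * eps h) N"
        unfolding t_def eps_sum_ev by (intro ev_cong) (auto simp: H.eps_scale)
      also have "\<dots> = q0 p" unfolding q0_def ev_split_mult by (intro sum.cong refl) auto
      finally show ?thesis using q0p by simp
    qed
    have lint: "a * t = sH (eps a) t" for a
    proof -
      define a' where "a' = a - sH (eps a) 1 + 1"
      have eps_a': "eps a' = 1"
      proof -
        have ed: "eps (x - y) = eps x - eps y" for x y by (rule module_hom.diff[OF H.eps_hom])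
        show ?thesis unfolding a'_def by (simp add: ed H.eps_add H.eps_scale H.eps_one)
      qed
      define N' where "N' = tmap (\<lambda>h. a' * h) id N"
      have finN': "finite (fsupp N')" unfolding N'_def by (rule finite_fsupp_tmap[OF finN])
      have suppN': "fsupp N' \<subseteq> UNIV \<times> kdual sP"
        using fsupp_tmap[of "\<lambda>h. a' * h" id N] suppN unfolding N'_def by auto
      have normN': "\<forall>b. (\<Sum>(h, q)\<in>fsupp N'. N' (h, q) * q (psi (b * h))) = eps b"
      proof
        fix b
        have "(\<Sum>(h, q)\<in>fsupp N'. N' (h, q) * q (psi (b * h))) = ev (*) (\<lambda>(h, q). q (psi (b * h))) N'"
          by (simp add: ev_split_mult)
        also have "\<dots> = ev (*) (\<lambda>(h, q). q (psi ((b * a') * h))) N"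
          unfolding N'_def ev_tmap[OF module_mult finN] by (intro ev_cong) (auto simp: mult.assoc)
        also have "\<dots> = eps (b * a')" using normeq[of "b * a'"] by (simp add: ev_split_mult)
        finally show "(\<Sum>(h, q)\<in>fsupp N'. N' (h, q) * q (psi (b * h))) = eps b"
          by (simp add: H.eps_mult eps_a')
      qed
      have "ev sH (\<lambda>(h, q). sH (q p) h) N' = ev sH (\<lambda>(h, q). sH (q p) h) N"
        by (rule teq_ev[OF H.ms _ _ _ _ uniq[OF finN' suppN' normN'] finN' finN])
           (auto simp: H.sc_add1 H.sc_add2 H.sc_sc fun_scale_def mult.commute)
      moreover have "ev sH (\<lambda>(h, q). sH (q p) h) N' = a' * t"
        unfolding N'_def ev_tmap[OF H.ms finN] t_def ev_hom[OF H.lin_hom[OF H.lin_lmult[of a']]]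
        by (intro ev_cong) (auto simp: H.mult_sc_right)
      ultimately have "a' * t = t" unfolding t_def by simp
      then show ?thesis unfolding a'_def by (simp add: algebra_simps H.mult_sc_left)
    qed
    define e0 where "e0 = tmap id S (D t)"
    have fin0: "finite (fsupp e0)" unfolding e0_def by (rule finite_fsupp_tmap[OF H.finD])
    have mu: "(\<Sum>(x, y)\<in>fsupp e0. sH (e0 (x, y)) (x * y)) = 1"
    proof -
      have "(\<Sum>(x, y)\<in>fsupp e0. sH (e0 (x, y)) (x * y)) = ev sH (\<lambda>(x, y). x * y) e0"
        by (simp add: ev_split)
      also have "\<dots> = H.Dl (\<lambda>x y. x * S y) t"
        unfolding e0_def ev_tmap[OF H.ms H.finD] H.Dl_def by simp
      also have "\<dots> = 1" by (simp add: H.Dl_anti2 eps_t H.sc_one)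
      finally show ?thesis .
    qed
    have cas: "teq sH sH UNIV UNIV (tmap (\<lambda>x. a * x) id e0) (tmap id (\<lambda>y. y * a) e0)" for a
    proof (rule teq_by_ev[OF H.ms basis finite_fsupp_tmap[OF fin0] finite_fsupp_tmap[OF fin0]])
      fix i assume i: "i < n"
      have "ev sH (\<lambda>(x, y). sH (f i x) y) (tmap (\<lambda>x. a * x) id e0) = H.Dl (\<lambda>x y. sH (f i (a * x)) (S y)) t"
        unfolding e0_def ev_tmap[OF H.ms finite_fsupp_tmap[OF H.finD]] ev_tmap[OF H.ms H.finD] H.Dl_def by simp
      also have "\<dots> = H.Dl (\<lambda>x y. sH (f i x) (S y)) t * a"
        by (rule H.integral_casimir[OF lint fhom[OF i]])
      also have "\<dots> = H.Dl (\<lambda>x y. sH (f i x) (S y) * a) t"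
        by (rule H.Dl_lin[OF H.lin_rmult])
      also have "\<dots> = ev sH (\<lambda>(x, y). sH (f i x) y) (tmap id (\<lambda>y. y * a) e0)"
        unfolding e0_def ev_tmap[OF H.ms finite_fsupp_tmap[OF H.finD]] ev_tmap[OF H.ms H.finD] H.Dl_def
        by (simp add: H.mult_sc_left)
      finally show "ev sH (\<lambda>(x, y). sH (f i x) y) (tmap (\<lambda>x. a * x) id e0) =
          ev sH (\<lambda>(x, y). sH (f i x) y) (tmap id (\<lambda>y. y * a) e0)" .
    qed
    show "separable_algebra sH"
      unfolding separable_algebra_def using fin0 mu cas by blast
  qed
qed


end
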